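(* Let $G$ be a finite graph whose edges are totally ordered and labelled $e_1<e_2<\dots<e_m$. Suppose that for some $i$ and some $k>0$ the edges $e_i,e_{i+1},\dots,e_{i+k}$ are all positive, all join the same two distinct vertices $x,y$ of $G$, and no other edge of $G$ joins $x$ and $y$. Let $S$ be any spanning tree of $G$. Then the subword $a(e_i,S)a(e_{i+1},S)\cdots a(e_{i+k},S)$ of the activity word $a(S)$ is one of the following: (1) when $S$ contains none of $e_i,\dots,e_{i+k}$: $\ell\ell\cdots\ell$ or $dd\cdots d$ (all $k+1$ letters equal); (2) when $S$ contains exactly the edge $e_{i+j}$ among them, for some $0<j\le k$: $\ell^{j}\,D\,d^{k-j}$, i.e. $e_i,\dots,e_{i+j-1}$ are labelled $\ell$, $e_{i+j}$ is labelled $D$, and $e_{i+j+1},\dots,e_{i+k}$ are labelled $d$; (3) when $S$ contains exactly the first edge $e_i$ among them: $L\,d^{k}$ or $D\,d^{k}$.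
   Context: Tutte's activity: let $G$ be a graph with signed edges (each edge positive or negative) whose $m$ edges are totally ordered. For a spanning tree $S$ of $G$ and an edge $e$: if $e\in S$ and $e$ is positive, $e$ is internally active, letter $L$, if $e$ is the lowest-ordered edge of $G$ that reconnects the two components of $S-\{e\}$, and internally inactive, letter $D$, otherwise. If $e\notin S$ and $e$ is positive, $e$ is externally active, letter $\ell$, if $e$ is the lowest-ordered edge of the unique cycle contained in $S\cup\{e\}$, and externally inactive, letter $d$, otherwise. For negative edges the same rules give the barred letters $\overline{L},\overline{D},\overline{\ell},\overline{d}$. The letter of $e$ is denoted $a(e,S)$, and the activity word $a(S)$ is the word of length $m$ whose $r$-th letter is $a(e_r,S)$. *)

theory Defs
  imports Main
begin

(* A finite graph with m edges e_1 < ... < e_m, represented by their indices 1..m.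
   ends r = (u,w) gives the two endpoints of edge r (multi-edges and loops allowed);
   pos r says whether edge r is positive. *)

datatype letter = L | D | ell | dee | Lbar | Dbar | ellbar | deebar

definition adj :: "(nat \<Rightarrow> 'v \<times> 'v) \<Rightarrow> nat set \<Rightarrow> ('v \<times> 'v) set" where
  "adj ends F = {(u,w). \<exists>f\<in>F. ends f = (u,w) \<or> ends f = (w,u)}"

definition conn :: "(nat \<Rightarrow> 'v \<times> 'v) \<Rightarrow> nat set \<Rightarrow> 'v \<Rightarrow> 'v \<Rightarrow> bool" where
  "conn ends F u w \<longleftrightarrow> (u,w) \<in> (adj ends F)\<^sup>*"

definition spanning_tree :: "'v set \<Rightarrow> nat \<Rightarrow> (nat \<Rightarrow> 'v \<times> 'v) \<Rightarrow> nat set \<Rightarrow> bool" where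
  "spanning_tree V m ends S \<longleftrightarrow>
     S \<subseteq> {1..m} \<and>
     (\<forall>u\<in>V. \<forall>w\<in>V. conn ends S u w) \<and>
     (\<forall>f\<in>S. \<not> conn ends (S - {f}) (fst (ends f)) (snd (ends f)))"

(* e in S is internally active: e is the lowest edge of G reconnecting the two components
   of S - {e}, i.e. lowest among edges whose endpoints lie in different components. *)
definition int_active :: "nat \<Rightarrow> (nat \<Rightarrow> 'v \<times> 'v) \<Rightarrow> nat set \<Rightarrow> nat \<Rightarrow> bool" where
  "int_active m ends S e \<longleftrightarrow>
     (\<forall>f\<in>{1..m}. \<not> conn ends (S - {e}) (fst (ends f)) (snd (ends f)) \<longrightarrow> e \<le> f)"

(* e not in S is externally active: e is the lowest edge of the unique cycle of S \<union> {e};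
   the edges of that cycle are exactly the edges f of S \<union> {e} whose endpoints remain
   connected in (S \<union> {e}) - {f}. *)
definition ext_active :: "(nat \<Rightarrow> 'v \<times> 'v) \<Rightarrow> nat set \<Rightarrow> nat \<Rightarrow> bool" where
  "ext_active ends S e \<longleftrightarrow>
     (\<forall>f\<in>S \<union> {e}. conn ends ((S \<union> {e}) - {f}) (fst (ends f)) (snd (ends f)) \<longrightarrow> e \<le> f)"

definition act :: "nat \<Rightarrow> (nat \<Rightarrow> 'v \<times> 'v) \<Rightarrow> (nat \<Rightarrow> bool) \<Rightarrow> nat set \<Rightarrow> nat \<Rightarrow> letter" where
  "act m ends pos S e =
    (if e \<in> S then
       (if int_active m ends S e then (if pos e then L else Lbar) else (if pos e then D else Dbar))
     else
       (if ext_active ends S e then (if pos e then ell else ellbar) else (if pos e then dee else deebar)))"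

definition act_word :: "nat \<Rightarrow> (nat \<Rightarrow> 'v \<times> 'v) \<Rightarrow> (nat \<Rightarrow> bool) \<Rightarrow> nat set \<Rightarrow> letter list" where
  "act_word m ends pos S = map (act m ends pos S) [1..<m+1]"

end

theory Submission
  imports Defs
begin

lemma adj_sym: "sym (adj ends F)"
  unfolding adj_def sym_def by auto

lemma conn_sym: "conn ends F u w \<Longrightarrow> conn ends F w u"
  unfolding conn_def by (rule symD[OF sym_rtrancl[OF adj_sym]])

lemma conn_edge: "r \<in> F \<Longrightarrow> ends r = (x,y) \<or> ends r = (y,x) \<Longrightarrow> conn ends F x y"
  unfolding conn_def adj_def by (rule r_into_rtrancl) auto

lemma adj_par:
  assumes "e \<in> F" "ends e = (x,y) \<or> ends e = (y,x)" "ends r = (x,y) \<or> ends r = (y,x)"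
  shows "adj ends (insert r F) = adj ends F"
  using assms unfolding adj_def by auto

lemma adj_swap:
  assumes "ends r' = (x,y) \<or> ends r' = (y,x)" "ends r = (x,y) \<or> ends r = (y,x)"
  shows "adj ends (insert r F) = adj ends (insert r' F)"
  using assms unfolding adj_def by auto

lemma map_const: "(\<forall>x\<in>set xs. f x = c) \<Longrightarrow> map f xs = replicate (length xs) c"
  by (induction xs) auto

lemma word:
  assumes "1 \<le> i" "i + k \<le> m"
  shows "take (k+1) (drop (i-1) (act_word m ends pos S)) = map (act m ends pos S) [i..<i+k+1]"
proof -
  have "drop (i-1) [1..<m+1] = [i..<m+1]" using assms by (simp add: drop_upt)
  moreover have "take (k+1) [i..<m+1] = [i..<i+k+1]" using assms by (subst take_upt) auto
  ultimately show ?thesis unfolding act_word_def drop_map take_map by (simp only:)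
qed

theorem lemma3p2:
  fixes V :: "'v set" and m :: nat and ends :: "nat \<Rightarrow> 'v \<times> 'v" and pos :: "nat \<Rightarrow> bool"
    and S :: "nat set" and i k :: nat and x y :: 'v
  assumes finV: "finite V"
    and ends_in: "\<forall>r\<in>{1..m}. fst (ends r) \<in> V \<and> snd (ends r) \<in> V"
    and i1: "1 \<le> i" and ik: "i + k \<le> m" and kpos: "0 < k"
    and xV: "x \<in> V" and yV: "y \<in> V" and xy: "x \<noteq> y"
    and par: "\<forall>r\<in>{i..i+k}. pos r \<and> (ends r = (x,y) \<or> ends r = (y,x))"
    and only: "\<forall>r\<in>{1..m} - {i..i+k}. ends r \<noteq> (x,y) \<and> ends r \<noteq> (y,x)"
    and ST: "spanning_tree V m ends S"
  shows "let w = take (k+1) (drop (i-1) (act_word m ends pos S)) in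
     (S \<inter> {i..i+k} = {} \<longrightarrow> w = replicate (k+1) ell \<or> w = replicate (k+1) dee) \<and>
     (\<forall>j. 0 < j \<and> j \<le> k \<and> S \<inter> {i..i+k} = {i+j} \<longrightarrow>
          w = replicate j ell @ [D] @ replicate (k-j) dee) \<and>
     (S \<inter> {i..i+k} = {i} \<longrightarrow> w = L # replicate k dee \<or> w = D # replicate k dee)"
proof -
  have Ssub: "S \<subseteq> {1..m}" and tree: "\<forall>f\<in>S. \<not> conn ends (S - {f}) (fst (ends f)) (snd (ends f))"
    using ST unfolding spanning_tree_def by auto
  have W: "take (k+1) (drop (i-1) (act_word m ends pos S)) = map (act m ends pos S) [i..<i+k+1]"
    using word[OF i1 ik] .
  have parr: "\<And>r. r \<in> {i..i+k} \<Longrightarrow> ends r = (x,y) \<or> ends r = (y,x)" using par by auto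
  have posr: "\<And>r. r \<in> {i..i+k} \<Longrightarrow> pos r" using par by auto
  have ins: "\<And>r f. r \<noteq> f \<Longrightarrow> (S \<union> {r}) - {f} = insert r (S - {f})" by auto
  have dee_after: "act m ends pos S r = dee" if "e \<in> S" "e \<in> {i..i+k}" "r \<in> {i..i+k}" "r \<notin> S" "e < r" for e r
  proof -
    have "conn ends ((S \<union> {r}) - {e}) (fst (ends e)) (snd (ends e))"
      using parr[OF that(2)] parr[OF that(3)] that
      by (auto intro: conn_edge)
    hence "\<not> ext_active ends S r" using that unfolding ext_active_def by force
    thus ?thesis using that posr unfolding act_def by auto
  qed
  have ell_before: "act m ends pos S r = ell" if "e \<in> S" "e \<in> {i..i+k}" "r \<in> {i..i+k}" "r \<notin> S" "r < e" for e r
  proof -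
    have "ext_active ends S r"
      unfolding ext_active_def
    proof
      fix f assume f: "f \<in> S \<union> {r}"
      show "conn ends ((S \<union> {r}) - {f}) (fst (ends f)) (snd (ends f)) \<longrightarrow> r \<le> f"
      proof (cases "f = r \<or> f = e")
        case True thus ?thesis using that by auto
      next
        case False
        hence "f \<in> S" "f \<noteq> r" "f \<noteq> e" using f by auto
        have "adj ends (insert r (S - {f})) = adj ends (S - {f})"
          by (rule adj_par[of e _ _ x y]) (use that \<open>f \<noteq> e\<close> parr in auto)
        hence "conn ends ((S \<union> {r}) - {f}) = conn ends (S - {f})"
          using ins[OF \<open>f \<noteq> r\<close>[symmetric]] unfolding conn_def[abs_def] by simp
        thus ?thesis using tree \<open>f \<in> S\<close> by simp
      qed
    qed
    thus ?thesis using that posr unfolding act_def by auto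
  qed
  have D_in: "act m ends pos S e = D" if "e \<in> S" "e \<in> {i..i+k}" "i < e" for e
  proof -
    have t: "\<not> conn ends (S - {e}) (fst (ends e)) (snd (ends e))" using tree that by auto
    have nc: "\<not> conn ends (S - {e}) x y"
    proof
      assume c: "conn ends (S - {e}) x y"
      have "ends e = (x,y) \<or> ends e = (y,x)" using parr[OF that(2)] .
      moreover have "conn ends (S - {e}) y x" using conn_sym[OF c] .
      ultimately have "conn ends (S - {e}) (fst (ends e)) (snd (ends e))" using c by (elim disjE) simp_all
      thus False using t by (rule notE[rotated])
    qed
    have "i \<in> {1..m}" using i1 ik by auto
    moreover have "\<not> conn ends (S - {e}) (fst (ends i)) (snd (ends i))"
    proof
      assume c: "conn ends (S - {e}) (fst (ends i)) (snd (ends i))"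
      have "ends i = (x,y) \<or> ends i = (y,x)" using parr[of i] by simp
      thus False using c nc conn_sym[of ends "S - {e}" y x] by (elim disjE) simp_all
    qed
    ultimately have "\<not> int_active m ends S e" using that unfolding int_active_def by force
    thus ?thesis using that posr unfolding act_def by auto
  qed
  have c1: "map (act m ends pos S) [i..<i+k+1] = replicate (k+1) ell \<or>
            map (act m ends pos S) [i..<i+k+1] = replicate (k+1) dee"
    if none: "S \<inter> {i..i+k} = {}"
  proof -
    define P where "P = (\<exists>f\<in>S. f < i \<and> conn ends (insert i (S - {f})) (fst (ends f)) (snd (ends f)))"
    have pi: "ends i = (x,y) \<or> ends i = (y,x)" by (rule parr) simp
    have key: "ext_active ends S r \<longleftrightarrow> \<not> P" if r: "r \<in> {i..i+k}" for r
    proof -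
      have rS: "r \<notin> S" using r none by blast
      have eq: "conn ends (insert r (S - {f})) = conn ends (insert i (S - {f}))" for f
        using adj_swap[OF pi parr[OF r], of "S - {f}"] unfolding conn_def[abs_def] by simp
      have 1: "\<And>f. f \<in> S \<Longrightarrow> (S \<union> {r}) - {f} = insert r (S - {f})" using rS ins by blast
      have 2: "\<And>f. f \<in> S \<Longrightarrow> (r \<le> f \<longleftrightarrow> \<not> f < i)"
      proof -
        fix f assume "f \<in> S"
        hence "f \<notin> {i..i+k}" using none by blast
        thus "r \<le> f \<longleftrightarrow> \<not> f < i" using r by auto
      qed
      have "ext_active ends S r \<longleftrightarrow>
          (\<forall>f\<in>S. conn ends ((S \<union> {r}) - {f}) (fst (ends f)) (snd (ends f)) \<longrightarrow> r \<le> f)"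
        unfolding ext_active_def by (simp only: Un_insert_right Un_empty_right ball_simps) simp
      also have "\<dots> \<longleftrightarrow> (\<forall>f\<in>S. conn ends (insert i (S - {f})) (fst (ends f)) (snd (ends f)) \<longrightarrow> \<not> f < i)"
        by (rule ball_cong) (simp_all only: 1 eq 2)
      also have "\<dots> \<longleftrightarrow> \<not> P" unfolding P_def by blast
      finally show ?thesis .
    qed
    have A: "act m ends pos S r = (if P then dee else ell)" if r: "r \<in> {i..i+k}" for r
    proof -
      have rS: "r \<notin> S" using r none by blast
      have pr: "pos r" using posr[OF r] .
      show ?thesis
        by (cases P) (simp_all only: act_def if_not_P[OF rS] key[OF r] pr if_True if_False not_True_eq_False not_False_eq_True)
    qed
    have B: "\<forall>r\<in>set [i..<i+k+1]. act m ends pos S r = (if P then dee else ell)"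
    proof
      fix r assume "r \<in> set [i..<i+k+1]"
      hence "r \<in> {i..i+k}" by auto
      thus "act m ends pos S r = (if P then dee else ell)" by (rule A)
    qed
    have "map (act m ends pos S) [i..<i+k+1] = replicate (k+1) (if P then dee else ell)"
      using map_const[OF B] by simp
    thus ?thesis by (cases P) simp_all
  qed
  have c2: "map (act m ends pos S) [i..<i+k+1] = replicate j ell @ [D] @ replicate (k-j) dee"
    if j: "0 < j" "j \<le> k" "S \<inter> {i..i+k} = {i+j}" for j
  proof -
    have sp: "[i..<i+k+1] = [i..<i+j] @ [i+j] @ [i+j+1..<i+k+1]"
    proof -
      have "[i..<i+k+1] = [i..<i+j] @ [i+j..<i+k+1]" using upt_add_eq_append[of i "i+j" "k+1-j"] j by simp
      moreover have "[i+j..<i+k+1] = (i+j) # [Suc (i+j)..<i+k+1]" by (rule upt_conv_Cons) (use j in auto)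
      ultimately show ?thesis by simp
    qed
    have eS: "i + j \<in> S" "i+j \<in> {i..i+k}" using j by auto
    have a0: "\<forall>r\<in>set [i..<i+j]. act m ends pos S r = ell"
    proof
      fix r assume "r \<in> set [i..<i+j]"
      hence r: "r \<in> {i..i+k}" "r < i+j" using j by auto
      have "r \<notin> {i+j}" using r by simp
      hence "r \<notin> S" using j r by blast
      thus "act m ends pos S r = ell" using ell_before[OF eS r(1) _ r(2)] by blast
    qed
    have a: "map (act m ends pos S) [i..<i+j] = replicate j ell"
      using map_const[OF a0] by simp
    have b0: "\<forall>r\<in>set [i+j+1..<i+k+1]. act m ends pos S r = dee"
    proof
      fix r assume "r \<in> set [i+j+1..<i+k+1]"
      hence r: "r \<in> {i..i+k}" "i+j < r" using j by auto
      have "r \<notin> {i+j}" using r by simp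
      hence "r \<notin> S" using j r by blast
      thus "act m ends pos S r = dee" using dee_after[OF eS r(1) _ r(2)] by blast
    qed
    have len: "length [i+j+1..<i+k+1] = k - j" unfolding length_upt by arith
    have b: "map (act m ends pos S) [i+j+1..<i+k+1] = replicate (k-j) dee"
      using map_const[OF b0] unfolding len .
    have d: "act m ends pos S (i+j) = D" using D_in[OF eS] j by simp
    show ?thesis unfolding sp map_append list.map(1,2) a b d by simp
  qed
  have c3: "map (act m ends pos S) [i..<i+k+1] = L # replicate k dee \<or>
            map (act m ends pos S) [i..<i+k+1] = D # replicate k dee"
    if j: "S \<inter> {i..i+k} = {i}"
  proof -
    have sp: "[i..<i+k+1] = i # [i+1..<i+k+1]" using upt_conv_Cons[of i "i+k+1"] by simp
    have eS: "i \<in> S" "i \<in> {i..i+k}" using j by auto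
    have b0: "\<forall>r\<in>set [i+1..<i+k+1]. act m ends pos S r = dee"
    proof
      fix r assume "r \<in> set [i+1..<i+k+1]"
      hence r: "r \<in> {i..i+k}" "i < r" by auto
      have "r \<notin> {i}" using r by simp
      hence "r \<notin> S" using j r by blast
      thus "act m ends pos S r = dee" using dee_after[OF eS r(1) _ r(2)] by blast
    qed
    have len: "length [i+1..<i+k+1] = k" by simp
    have b: "map (act m ends pos S) [i+1..<i+k+1] = replicate k dee"
      using map_const[OF b0] unfolding len .
    have pi': "pos i" using posr[OF eS(2)] .
    have "act m ends pos S i = L \<or> act m ends pos S i = D"
      unfolding act_def using eS(1) pi' by simp
    moreover have "map (act m ends pos S) [i..<i+k+1] = act m ends pos S i # replicate k dee"
      unfolding sp list.map(2) b ..
    ultimately show ?thesis by (elim disjE) simp_all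
  qed
  show ?thesis unfolding Let_def W using c1 c2 c3 by blast
qed

end
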